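(* For every $\omega\in(0,\infty)$, the pair $(G_c,g(0))$ is observable, where $g$ is the solution of the boundary value problem described in the context.
   Context: Let $a\in\mathbb{R}$, $\tau>0$, $G_c=\begin{bmatrix}0&\omega\\-\omega&0\end{bmatrix}$, $E$ the $2\times2$ identity, $\gamma_c=[1,0]$, $\phi_0\equiv1$, $\phi_n(x)=\sqrt2\cos(n\pi x)$ ($n\ge1$), $\mathcal L(x)=\sum_{n=0}^N\ell_n\phi_n(x)$, where for some $\delta>0$, $N\in\mathbb{N}$ satisfies $a-(n\pi)^2<-\delta$ for $n>N$ and $L=[\ell_0\ \ldots\ \ell_N]^\top$ is chosen so that a positive-definite $Q$ satisfies $Q(A+LC)+(A+LC)^\top Q<-2\delta Q$, with $A=\mathrm{diag}(a-(n\pi)^2)_{n=0}^N$, $C=[1\ \sqrt2\ \ldots\ \sqrt2]$. $g\in H^2((0,1);\mathbb{R}^{1\times2})$ is the solution of $g''(x)=g(x)(G_c-aE)-\mathcal L(x)g(0)$, $g'(0)=0$, $g'(1)=-\gamma_ce^{-G_c\tau}$. Observability of a pair $(M,c)$ with $M\in\mathbb{R}^{2\times2}$, $c\in\mathbb{R}^{1\times2}$ means the matrix with rows $c$, $cM$ has rank 2. *)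

theory Defs
  imports "HOL-Analysis.Analysis"
begin

primrec matpow :: "real^'n^'n \<Rightarrow> nat \<Rightarrow> real^'n^'n" where
  "matpow M 0 = mat 1"
| "matpow M (Suc k) = matpow M k ** M"

definition mexp :: "real^'n^'n \<Rightarrow> real^'n^'n" where
  "mexp M = (\<Sum>k. (1 / fact k) *\<^sub>R matpow M k)"

definition observable :: "real^2^2 \<Rightarrow> real^2 \<Rightarrow> bool" where
  "observable M c \<longleftrightarrow> rank (vector [c, c v* M] :: real^2^2) = 2"

definition Gc :: "real \<Rightarrow> real^2^2" where
  "Gc \<omega> = vector [vector [0, \<omega>], vector [- \<omega>, 0]]"

definition gammac :: "real^2" where
  "gammac = vector [1, 0]"

definition phi :: "nat \<Rightarrow> real \<Rightarrow> real" where
  "phi n x = (if n = 0 then 1 else sqrt 2 * cos (real n * pi * x))"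

definition Lfun :: "nat \<Rightarrow> (nat \<Rightarrow> real) \<Rightarrow> real \<Rightarrow> real" where
  "Lfun N l x = (\<Sum>n\<le>N. l n * phi n x)"

(* (N+1)x(N+1) matrices indexed by {0..N}, represented as nat => nat => real *)
definition Amat :: "real \<Rightarrow> nat \<Rightarrow> nat \<Rightarrow> real" where
  "Amat a i j = (if i = j then a - (real i * pi)^2 else 0)"

definition Cvec :: "nat \<Rightarrow> real" where
  "Cvec j = (if j = 0 then 1 else sqrt 2)"

definition ALC :: "real \<Rightarrow> (nat \<Rightarrow> real) \<Rightarrow> nat \<Rightarrow> nat \<Rightarrow> real" where
  "ALC a l i j = Amat a i j + l i * Cvec j"

definition pos_def_mat :: "nat \<Rightarrow> (nat \<Rightarrow> nat \<Rightarrow> real) \<Rightarrow> bool" where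
  "pos_def_mat N Q \<longleftrightarrow> (\<forall>i\<le>N. \<forall>j\<le>N. Q i j = Q j i) \<and>
     (\<forall>v::nat \<Rightarrow> real. (\<exists>i\<le>N. v i \<noteq> 0) \<longrightarrow> (\<Sum>i\<le>N. \<Sum>j\<le>N. v i * Q i j * v j) > 0)"

definition lyap_ineq :: "nat \<Rightarrow> real \<Rightarrow> real \<Rightarrow> (nat \<Rightarrow> real) \<Rightarrow> (nat \<Rightarrow> nat \<Rightarrow> real) \<Rightarrow> bool" where
  "lyap_ineq N a \<delta> l Q \<longleftrightarrow>
     (\<forall>v::nat \<Rightarrow> real. (\<exists>i\<le>N. v i \<noteq> 0) \<longrightarrow>
        (\<Sum>i\<le>N. \<Sum>j\<le>N. v i *
           ((\<Sum>k\<le>N. Q i k * ALC a l k j) + (\<Sum>k\<le>N. ALC a l k i * Q k j) + 2 * \<delta> * Q i j)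
           * v j) < 0)"

end

theory Submission
  imports Defs
begin

lemma aux2:
  fixes p q x y w :: real
  assumes "w > 0" "p * x + q * y = 0" "- w * q * x + w * p * y = 0" "p \<noteq> 0 \<or> q \<noteq> 0"
  shows "x = 0 \<and> y = 0"
proof -
  have "w * (p*y - q*x) = 0" using assms(3) by (simp add: algebra_simps)
  hence e3: "p*y = q*x" using assms(1) by simp
  have "(p*p+q*q)*x = p*(p*x) + q*(q*x)" by (simp add: algebra_simps)
  also have "... = p*(p*x) + q*(p*y)" using e3 by simp
  also have "... = p*(p*x+q*y)" by (simp add: algebra_simps)
  finally have h1: "(p*p+q*q)*x = 0" using assms(2) by simp
  have "(p*p+q*q)*y = p*(p*y) + q*(q*y)" by (simp add: algebra_simps)
  also have "... = p*(q*x) + q*(q*y)" using e3 by simp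
  also have "... = q*(p*x+q*y)" by (simp add: algebra_simps)
  finally have h2: "(p*p+q*q)*y = 0" using assms(2) by simp
  have "p*p+q*q \<noteq> 0" using assms(4)
    by (simp add: sum_squares_eq_zero_iff)
  thus ?thesis using h1 h2 by auto
qed

lemma obs_iff:
  assumes "\<omega> > 0" "c \<noteq> 0"
  shows "observable (Gc \<omega>) c"
proof -
  let ?A = "vector [c, c v* Gc \<omega>] :: real^2^2"
  have "\<not> (\<exists>x. x \<noteq> 0 \<and> ?A *v x = 0)"
  proof
    assume "\<exists>x. x \<noteq> 0 \<and> ?A *v x = 0"
    then obtain x where x: "x \<noteq> 0" "?A *v x = 0" by blast
    have e1: "c$1 * x$1 + c$2 * x$2 = 0" and e2: "- \<omega> * c$2 * x$1 + \<omega> * c$1 * x$2 = 0"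
      using x(2) unfolding vec_eq_iff forall_2
      by (auto simp: matrix_vector_mult_def vector_matrix_mult_def sum_2 Gc_def algebra_simps)
    have "c$1 \<noteq> 0 \<or> c$2 \<noteq> 0" using assms(2) by (auto simp: vec_eq_iff forall_2)
    then have "x$1 = 0 \<and> x$2 = 0" using aux2[OF assms(1) e1 e2] by blast
    then have "x = 0" by (auto simp: vec_eq_iff forall_2)
    with x show False by simp
  qed
  then show ?thesis unfolding observable_def
    using matrix_nonfull_linear_equations_eq[of ?A] by auto
qed

definition M2 :: "real \<Rightarrow> real \<Rightarrow> real^2^2" where
  "M2 a b = vector [vector [a, - b], vector [b, a]]"

lemma M2_mult: "M2 a b ** M2 c d = M2 (a*c - b*d) (a*d + b*c)"
  by (simp add: M2_def vec_eq_iff forall_2 matrix_matrix_mult_def sum_2 algebra_simps)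

lemma M2_one: "mat 1 = M2 1 0"
  by (simp add: M2_def vec_eq_iff forall_2 mat_def)

lemma M2_scale: "c *\<^sub>R M2 a b = M2 (c*a) (c*b)"
  by (simp add: M2_def vec_eq_iff forall_2)

lemma M2_add: "M2 a b + M2 c d = M2 (a+c) (b+d)"
  by (simp add: M2_def vec_eq_iff forall_2)

lemma M2_lin: "a *\<^sub>R M2 1 0 + b *\<^sub>R M2 0 1 = M2 a b"
  by (simp add: M2_def vec_eq_iff forall_2)

lemma matpow_M2: "matpow (M2 0 t) k = M2 (Re ((\<i> * complex_of_real t)^k)) (Im ((\<i> * complex_of_real t)^k))"
proof (induction k)
  case 0
  then show ?case by (simp add: M2_one)
next
  case (Suc k)
  then show ?case by (simp add: M2_mult algebra_simps)
qed

lemma mexp_M2: "mexp (M2 0 t) = M2 (cos t) (sin t)"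
proof -
  let ?w = "\<lambda>k. (\<i> * complex_of_real t)^k /\<^sub>R fact k"
  have e: "(\<lambda>k. ?w k) sums exp (\<i> * complex_of_real t)" by (rule exp_converges)
  have r: "(\<lambda>k. Re (?w k)) sums cos t" using sums_Re[OF e] by (simp add: Re_exp)
  have i: "(\<lambda>k. Im (?w k)) sums sin t" using sums_Im[OF e] by (simp add: Im_exp)
  have s: "(\<lambda>k. Re (?w k) *\<^sub>R M2 1 0 + Im (?w k) *\<^sub>R M2 0 1) sums (cos t *\<^sub>R M2 1 0 + sin t *\<^sub>R M2 0 1)"
    by (intro sums_add sums_scaleR_left r i)
  have "(\<lambda>k. Re (?w k) *\<^sub>R M2 1 0 + Im (?w k) *\<^sub>R M2 0 1) = (\<lambda>k. (1 / fact k) *\<^sub>R matpow (M2 0 t) k)"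
    by (rule ext) (simp add: M2_add matpow_M2 M2_scale field_simps)
  with s show ?thesis unfolding mexp_def M2_lin by (simp add: sums_iff)
qed

lemma gam_ne: "gammac v* mexp (- (\<tau> *\<^sub>R Gc \<omega>)) \<noteq> 0"
proof -
  have eq: "- (\<tau> *\<^sub>R Gc \<omega>) = M2 0 (\<tau> * \<omega>)"
    by (simp add: M2_def Gc_def vec_eq_iff forall_2)
  have "gammac v* mexp (- (\<tau> *\<^sub>R Gc \<omega>)) = vector [cos (\<tau> * \<omega>), - sin (\<tau> * \<omega>)]"
    unfolding eq mexp_M2 by (simp add: M2_def gammac_def vec_eq_iff forall_2 vector_matrix_mult_def sum_2)
  moreover have "vector [cos (\<tau> * \<omega>), - sin (\<tau> * \<omega>)] \<noteq> (0::real^2)"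
  proof
    assume "vector [cos (\<tau> * \<omega>), - sin (\<tau> * \<omega>)] = (0::real^2)"
    hence "cos (\<tau> * \<omega>) = 0" "sin (\<tau> * \<omega>) = 0"
      by (metis vector_2 zero_index neg_equal_0_iff_equal)+
    thus False using sin_cos_squared_add[of "\<tau> * \<omega>"] by simp
  qed
  ultimately show ?thesis by simp
qed

lemma inner_deriv:
  fixes g :: "real \<Rightarrow> real^2"
  assumes "(g has_vector_derivative gD) (at x within S)" "(h has_vector_derivative hD) (at x within S)"
  shows "((\<lambda>x. inner (g x) (h x)) has_real_derivative (inner (g x) hD + inner gD (h x))) (at x within S)"
proof -
  have "((\<lambda>x. inner (g x) (h x)) has_derivative (\<lambda>t. inner (g x) (t *\<^sub>R hD) + inner (t *\<^sub>R gD) (h x))) (at x within S)"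
    using has_derivative_inner[OF assms(1)[unfolded has_vector_derivative_def] assms(2)[unfolded has_vector_derivative_def]] .
  then show ?thesis unfolding has_field_derivative_def
    by (rule has_derivative_eq_rhs) (auto simp: fun_eq_iff algebra_simps)
qed

lemma ode_zero:
  fixes g g' g'' :: "real \<Rightarrow> real^2" and M :: "real^2^2"
  assumes d1: "\<forall>x\<in>{0..1}. (g has_vector_derivative g' x) (at x within {0..1})"
    and d2: "\<forall>x\<in>{0..1}. (g' has_vector_derivative g'' x) (at x within {0..1})"
    and eq: "\<forall>x\<in>{0..1}. g'' x = g x v* M"
    and z0: "g 0 = 0" "g' 0 = 0"
  shows "g' 1 = 0"
proof -
  have bl: "bounded_linear (\<lambda>y. transpose M *v y)" by (rule matrix_vector_mul_bounded_linear)
  obtain K where K: "K > 0" "\<And>y. norm (transpose M *v y) \<le> norm y * K"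
    using bounded_linear.pos_bounded[OF bl] by blast
  define C where "C = 2 + 2 * K"
  define E where "E x = inner (g x) (g x) + inner (g' x) (g' x)" for x
  define E' where "E' x = 2 * inner (g x) (g' x) + 2 * inner (g' x) (g'' x)" for x
  define F where "F x = exp (- (C * x)) * E x" for x
  define F' where "F' x = exp (- (C * x)) * (E' x - C * E x)" for x
  have dE: "(E has_real_derivative E' x) (at x within {0..1})" if "x \<in> {0..1}" for x
  proof -
    have a: "((\<lambda>x. inner (g x) (g x)) has_real_derivative (inner (g x) (g' x) + inner (g' x) (g x))) (at x within {0..1})"
      using inner_deriv d1 that by blast
    have b: "((\<lambda>x. inner (g' x) (g' x)) has_real_derivative (inner (g' x) (g'' x) + inner (g'' x) (g' x))) (at x within {0..1})"
      using inner_deriv d2 that by blast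
    show ?thesis unfolding E_def E'_def
      using DERIV_add[OF a b] by (simp add: inner_commute)
  qed
  have dF: "(F has_vector_derivative F' x) (at x within {0..1})" if "x \<in> {0..1}" for x
  proof -
    have "(F has_real_derivative F' x) (at x within {0..1})"
      unfolding F_def F'_def
      by (auto intro!: derivative_eq_intros dE[OF that] simp: algebra_simps)
    then show ?thesis by (simp add: has_real_derivative_iff_has_vector_derivative)
  qed
  have Ebound: "E' x \<le> C * E x" if "x \<in> {0..1}" for x
  proof -
    have g'': "g'' x = transpose M *v g x" using eq that by simp
    let ?u = "norm (g x)" and ?v = "norm (g' x)"
    have i1: "inner (g x) (g' x) \<le> ?u * ?v" by (rule norm_cauchy_schwarz)
    have i2: "inner (g' x) (g'' x) \<le> ?v * (?u * K)"
    proof -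
      have "inner (g' x) (g'' x) \<le> ?v * norm (g'' x)" by (rule norm_cauchy_schwarz)
      also have "... \<le> ?v * (?u * K)" unfolding g'' by (rule mult_left_mono[OF K(2)]) simp
      finally show ?thesis .
    qed
    have sq: "2 * (?u * ?v) \<le> ?u^2 + ?v^2" using sum_squares_bound[of ?u ?v] by (simp add: mult.assoc)
    have Eeq: "E x = ?u^2 + ?v^2" unfolding E_def by (simp add: power2_norm_eq_inner)
    have "E' x \<le> 2 * (?u * ?v) + 2 * K * (?u * ?v)" unfolding E'_def using i1 i2 by (simp add: algebra_simps)
    also have "... = (1 + K) * (2 * (?u * ?v))" by (simp add: algebra_simps)
    also have "... \<le> (1 + K) * (?u^2 + ?v^2)" using sq K(1) by (intro mult_left_mono) auto
    also have "... \<le> C * E x" unfolding Eeq C_def using K(1)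
      by (intro mult_right_mono) auto
    finally show ?thesis .
  qed
  have int: "(F' has_integral (F 1 - F 0)) {0..1}"
    by (rule fundamental_theorem_of_calculus) (auto intro: dF)
  have "F 1 - F 0 \<le> 0"
  proof -
    have "0 \<le> -(F 1 - F 0)"
      by (rule has_integral_nonneg[OF has_integral_neg[OF int]])
         (use Ebound in \<open>auto simp: F'_def mult_nonneg_nonpos\<close>)
    thus ?thesis by simp
  qed
  moreover have "F 0 = 0" unfolding F_def E_def using z0 by simp
  ultimately have "E 1 \<le> 0" unfolding F_def by (simp add: mult_le_0_iff)
  hence "norm (g' 1) ^ 2 \<le> 0" unfolding E_def power2_norm_eq_inner
    using inner_ge_zero[of "g 1"] by linarith
  thus ?thesis by simp
qed

theorem lemma4:
  fixes a \<tau> \<delta> \<omega> :: real and N :: nat and l :: "nat \<Rightarrow> real"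
    and Q :: "nat \<Rightarrow> nat \<Rightarrow> real"
    and g g' g'' :: "real \<Rightarrow> real^2"
  assumes "\<tau> > 0" and "\<delta> > 0"
    and "\<forall>n>N. a - (real n * pi)^2 < - \<delta>"
    and "pos_def_mat N Q"
    and "lyap_ineq N a \<delta> l Q"
    and "\<omega> > 0"
    and "\<forall>x\<in>{0..1}. (g has_vector_derivative g' x) (at x within {0..1})"
    and "\<forall>x\<in>{0..1}. (g' has_vector_derivative g'' x) (at x within {0..1})"
    and "\<forall>x\<in>{0..1}. g'' x = g x v* (Gc \<omega> - a *\<^sub>R mat 1) - Lfun N l x *\<^sub>R g 0"
    and "g' 0 = 0"
    and "g' 1 = - (gammac v* mexp (- (\<tau> *\<^sub>R Gc \<omega>)))"
  shows "observable (Gc \<omega>) (g 0)"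
proof (rule ccontr)
  assume nobs: "\<not> observable (Gc \<omega>) (g 0)"
  have g0: "g 0 = 0" using obs_iff[OF assms(6)] nobs by blast
  have eq: "\<forall>x\<in>{0..1}. g'' x = g x v* (Gc \<omega> - a *\<^sub>R mat 1)"
    using assms(9) unfolding g0 by (simp only: scaleR_zero_right diff_zero)
  have "g' 1 = 0" by (rule ode_zero[OF assms(7) assms(8) eq g0 assms(10)])
  then show False using assms(11) gam_ne[of \<tau> \<omega>] by (metis minus_minus minus_zero)
qed

end
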